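(* Assume the standing setting in the context, and assume that for every $\boldsymbol a\in\mathrm{Dom}(\boldsymbol A)$, $\Pr^+_\Omega(h(\boldsymbol x)\mid s_1,\boldsymbol a)\ge \Pr^+_\Omega(h(\boldsymbol x)\mid s_0,\boldsymbol a)$. Let $\boldsymbol U\subseteq \boldsymbol X\cup\{Y\}$ be any set of variables such that, under $\Omega$, $(\boldsymbol X\perp\!\!\!\perp C\mid S,\boldsymbol A,\boldsymbol U)$, and assume $\Omega(S=s,\boldsymbol A=\boldsymbol a,\boldsymbol U=\boldsymbol u, C=1)>0$ for all $s,\boldsymbol a,\boldsymbol u$. Then $$0\le \digamma(\Omega)\le \frac{1}{|\mathrm{Dom}(\boldsymbol A)|}\sum_{\boldsymbol a\in\mathrm{Dom}(\boldsymbol A)}\Big(\max_{\boldsymbol u\in\mathrm{Dom}(\boldsymbol U)}\Pr^+_\Delta(h(\boldsymbol x)\mid s_1,\boldsymbol a,\boldsymbol u)-\min_{\boldsymbol u\in\mathrm{Dom}(\boldsymbol U)}\Pr^+_\Delta(h(\boldsymbol x)\mid s_0,\boldsymbol a,\boldsymbol u)\Big).$$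
   Context: Standing setting. All variables have finite domains. $\boldsymbol X=(X_1,\dots,X_n)$ is a vector of features, $Y\in\{0,1\}$ is the label, and $C\in\{0,1\}$ is a selection indicator. $\Omega$ is a joint distribution of $(\boldsymbol X,Y,C)$; its marginal on $(\boldsymbol X,Y)$ is the target population. The biased distribution is $\Delta(\boldsymbol x,y)=\Omega(\boldsymbol x,y\mid C=1)$. A protected attribute $S$ is one of the features, with $\mathrm{Dom}(S)=\{s_0,s_1\}$. A set of admissible attributes $\boldsymbol A\subseteq \boldsymbol X\cup\{Y\}$ with $S\notin\boldsymbol A$ is fixed. A classifier is a function $h:\mathrm{Dom}(\boldsymbol X)\to\{0,1\}$. For a distribution $P$ and an event $E$, write $\Pr^+_P(h(\boldsymbol x)\mid E)=P(h(\boldsymbol X)=1\mid E)$; conditioning on $s,\boldsymbol a,\boldsymbol u$ means conditioning on $S=s,\boldsymbol A=\boldsymbol a,\boldsymbol U=\boldsymbol u$. The fairness query of $h$ on $P$ is $$\digamma(P)=\frac{1}{|\mathrm{Dom}(\boldsymbol A)|}\sum_{\boldsymbol a\in\mathrm{Dom}(\boldsymbol A)}\Big|\Pr^+_P(h(\boldsymbol x)\mid S=s_1,\boldsymbol A=\boldsymbol a)-\Pr^+_P(h(\boldsymbol x)\mid S=s_0,\boldsymbol A=\boldsymbol a)\Big|.$$ *)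

theory Defs
  imports Complex_Main "HOL-Library.FuncSet"
begin

(* Variables are indexed by a finite type 'v (the features X_1..X_n together with
   the label Y); D v :: nat set is the finite domain of variable v.
   A full assignment of (X,Y) is a map w :: 'v => nat in Pi\<^sub>E UNIV D.
   For a set of variables B, Dom(B) = Pi\<^sub>E B D, and "B = b" is "restrict w B = b". *)

(* joint distribution Omega of (X,Y,C): probability of an event on (w,c) *)
definition pj :: "('w \<Rightarrow> bool \<Rightarrow> real) \<Rightarrow> 'w set \<Rightarrow> ('w \<Rightarrow> bool \<Rightarrow> bool) \<Rightarrow> real" where
  "pj \<Omega> W E = (\<Sum>w\<in>W. \<Sum>c\<in>UNIV. if E w c then \<Omega> w c else 0)"

definition tgt :: "('w \<Rightarrow> bool \<Rightarrow> real) \<Rightarrow> 'w \<Rightarrow> real" where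
  "tgt \<Omega> w = \<Omega> w True + \<Omega> w False"

definition delta :: "('w \<Rightarrow> bool \<Rightarrow> real) \<Rightarrow> 'w set \<Rightarrow> 'w \<Rightarrow> real" where
  "delta \<Omega> W w = \<Omega> w True / pj \<Omega> W (\<lambda>w c. c)"

definition cprob :: "('w \<Rightarrow> real) \<Rightarrow> 'w set \<Rightarrow> ('w \<Rightarrow> bool) \<Rightarrow> ('w \<Rightarrow> bool) \<Rightarrow> real" where
  "cprob P W F E = (\<Sum>w\<in>W. if F w \<and> E w then P w else 0) / (\<Sum>w\<in>W. if E w then P w else 0)"

definition fq :: "(('v \<Rightarrow> nat) \<Rightarrow> real) \<Rightarrow> ('v \<Rightarrow> nat set) \<Rightarrow> (('v \<Rightarrow> nat) \<Rightarrow> bool)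
    \<Rightarrow> 'v \<Rightarrow> nat \<Rightarrow> nat \<Rightarrow> 'v set \<Rightarrow> real" where
  "fq P D hh Sv s0 s1 A =
     (1 / real (card (Pi\<^sub>E A D))) *
     (\<Sum>a\<in>Pi\<^sub>E A D.
        \<bar>cprob P (Pi\<^sub>E UNIV D) hh (\<lambda>w. w Sv = s1 \<and> restrict w A = a)
         - cprob P (Pi\<^sub>E UNIV D) hh (\<lambda>w. w Sv = s0 \<and> restrict w A = a)\<bar>)"

(* (X \<perp> C | S, A, U) under Omega, for all values of X, C, S, A, U,
   in the product form P(x,c,z) P(z) = P(x,z) P(c,z) *)
definition cond_indep_XC :: "(('v \<Rightarrow> nat) \<Rightarrow> bool \<Rightarrow> real) \<Rightarrow> ('v \<Rightarrow> nat set) \<Rightarrow> 'v set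
    \<Rightarrow> 'v \<Rightarrow> 'v set \<Rightarrow> 'v set \<Rightarrow> bool" where
  "cond_indep_XC \<Omega> D X Sv A U \<longleftrightarrow>
    (\<forall>x c s a u.
      let W = Pi\<^sub>E UNIV D;
          Z = (\<lambda>w. w Sv = s \<and> restrict w A = a \<and> restrict w U = u) in
      pj \<Omega> W (\<lambda>w c'. restrict w X = x \<and> c' = c \<and> Z w) * pj \<Omega> W (\<lambda>w c'. Z w)
      = pj \<Omega> W (\<lambda>w c'. restrict w X = x \<and> Z w) * pj \<Omega> W (\<lambda>w c'. c' = c \<and> Z w))"

end

theory Submission
  imports Defs
begin


lemma pj_cong:
  assumes "\<forall>w\<in>W. \<forall>c. E w c = E' w c"
  shows "pj \<Omega> W E = pj \<Omega> W E'"
  unfolding pj_def using assms by (intro sum.cong refl) auto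

lemma pj_mono:
  assumes "\<forall>w c. 0 \<le> \<Omega> w c" "\<forall>w c. E w c \<longrightarrow> E' w c"
  shows "pj \<Omega> W E \<le> pj \<Omega> W E'"
  unfolding pj_def using assms by (intro sum_mono) auto

lemma pj_sum:
  assumes "finite S"
  shows "(\<Sum>x\<in>S. pj \<Omega> W (\<lambda>w c. g w = x \<and> P w c)) = pj \<Omega> W (\<lambda>w c. g w \<in> S \<and> P w c)"
proof -
  have "(\<Sum>x\<in>S. pj \<Omega> W (\<lambda>w c. g w = x \<and> P w c))
     = (\<Sum>x\<in>S. \<Sum>w\<in>W. \<Sum>c\<in>UNIV. if g w = x \<and> P w c then \<Omega> w c else 0)"
    unfolding pj_def by simp
  also have "\<dots> = (\<Sum>w\<in>W. \<Sum>x\<in>S. \<Sum>c\<in>UNIV. if g w = x \<and> P w c then \<Omega> w c else 0)"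
    by (rule sum.swap)
  also have "\<dots> = (\<Sum>w\<in>W. \<Sum>c\<in>UNIV. \<Sum>x\<in>S. if g w = x \<and> P w c then \<Omega> w c else 0)"
    by (intro sum.cong refl sum.swap)
  also have "\<dots> = (\<Sum>w\<in>W. \<Sum>c\<in>UNIV. if g w \<in> S \<and> P w c then \<Omega> w c else 0)"
  proof (intro sum.cong refl)
    fix w c
    show "(\<Sum>x\<in>S. if g w = x \<and> P w c then \<Omega> w c else 0) = (if g w \<in> S \<and> P w c then \<Omega> w c else 0)"
      using assms by (cases "P w c") (simp_all add: sum.delta)
  qed
  finally show ?thesis unfolding pj_def .
qed

lemma cprob_tgt:
  "cprob (tgt \<Omega>) W F E = pj \<Omega> W (\<lambda>w c. F w \<and> E w) / pj \<Omega> W (\<lambda>w c. E w)"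
proof -
  have "\<And>G. (\<Sum>w\<in>W. \<Sum>c\<in>UNIV. if G w then \<Omega> w c else 0) = (\<Sum>w\<in>W. if G w then tgt \<Omega> w else 0)"
    unfolding tgt_def by (intro sum.cong refl) (simp add: UNIV_bool)
  thus ?thesis unfolding cprob_def pj_def by simp
qed

lemma cprob_delta:
  assumes "pj \<Omega> W (\<lambda>w c. c) \<noteq> 0"
  shows "cprob (delta \<Omega> W) W F E = pj \<Omega> W (\<lambda>w c. c \<and> F w \<and> E w) / pj \<Omega> W (\<lambda>w c. c \<and> E w)"
proof -
  let ?K = "pj \<Omega> W (\<lambda>w c. c)"
  have 1: "\<And>G. (\<Sum>w\<in>W. if G w then delta \<Omega> W w else 0) = (\<Sum>w\<in>W. if G w then \<Omega> w True else 0) / ?K"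
    unfolding delta_def sum_divide_distrib by (intro sum.cong refl) auto
  have 2: "\<And>G. pj \<Omega> W (\<lambda>w c. c \<and> G w) = (\<Sum>w\<in>W. if G w then \<Omega> w True else 0)"
    unfolding pj_def by (simp add: UNIV_bool)
  show ?thesis unfolding cprob_def 1 2 using assms by simp
qed

lemma wavg:
  fixes q n c :: "'a \<Rightarrow> real"
  assumes "finite I" "I \<noteq> {}" "\<forall>i\<in>I. q i > 0" "\<forall>i\<in>I. n i = c i * q i"
  shows "Min (c ` I) \<le> (\<Sum>i\<in>I. n i) / (\<Sum>i\<in>I. q i) \<and> (\<Sum>i\<in>I. n i) / (\<Sum>i\<in>I. q i) \<le> Max (c ` I)"
proof -
  have qp: "(\<Sum>i\<in>I. q i) > 0" using assms by (intro sum_pos) auto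
  have "(\<Sum>i\<in>I. n i) \<le> (\<Sum>i\<in>I. Max (c ` I) * q i)"
    using assms by (intro sum_mono) (auto intro!: mult_right_mono Max_ge less_imp_le)
  hence u: "(\<Sum>i\<in>I. n i) \<le> Max (c ` I) * (\<Sum>i\<in>I. q i)" by (simp add: sum_distrib_left)
  have "(\<Sum>i\<in>I. Min (c ` I) * q i) \<le> (\<Sum>i\<in>I. n i)"
    using assms by (intro sum_mono) (auto intro!: mult_right_mono Min_le less_imp_le)
  hence l: "Min (c ` I) * (\<Sum>i\<in>I. q i) \<le> (\<Sum>i\<in>I. n i)" by (simp add: sum_distrib_left)
  show ?thesis using u l qp by (simp add: pos_divide_le_eq pos_le_divide_eq)
qed

theorem proposition2:
  fixes D :: "'v::finite \<Rightarrow> nat set"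
    and yv Sv :: 'v and s0 s1 :: nat
    and \<Omega> :: "('v \<Rightarrow> nat) \<Rightarrow> bool \<Rightarrow> real"
    and h :: "('v \<Rightarrow> nat) \<Rightarrow> bool"
    and A U :: "'v set"
  defines "X \<equiv> UNIV - {yv}"
  defines "W \<equiv> Pi\<^sub>E UNIV D"
  defines "hh \<equiv> (\<lambda>w. h (restrict w X))"
  assumes dom_fin: "\<forall>v. finite (D v) \<and> D v \<noteq> {}"
    and dom_Y: "D yv = {0, 1}"
    and S_feat: "Sv \<in> X"
    and dom_S: "D Sv = {s0, s1}" and s_ne: "s0 \<noteq> s1"
    and A_adm: "Sv \<notin> A"
    and \<Omega>_nonneg: "\<forall>w c. 0 \<le> \<Omega> w c"
    and \<Omega>_supp: "\<forall>w c. w \<notin> W \<longrightarrow> \<Omega> w c = 0"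
    and \<Omega>_sum: "pj \<Omega> W (\<lambda>w c. True) = 1"
    and mono_gap: "\<forall>a\<in>Pi\<^sub>E A D.
        cprob (tgt \<Omega>) W hh (\<lambda>w. w Sv = s1 \<and> restrict w A = a)
        \<ge> cprob (tgt \<Omega>) W hh (\<lambda>w. w Sv = s0 \<and> restrict w A = a)"
    and ci: "cond_indep_XC \<Omega> D X Sv A U"
    and pos: "\<forall>s\<in>{s0, s1}. \<forall>a\<in>Pi\<^sub>E A D. \<forall>u\<in>Pi\<^sub>E U D.
        pj \<Omega> W (\<lambda>w c. w Sv = s \<and> restrict w A = a \<and> restrict w U = u \<and> c) > 0"
  shows "0 \<le> fq (tgt \<Omega>) D hh Sv s0 s1 A \<and>
         fq (tgt \<Omega>) D hh Sv s0 s1 A \<le>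
         (1 / real (card (Pi\<^sub>E A D))) *
         (\<Sum>a\<in>Pi\<^sub>E A D.
            Max ((\<lambda>u. cprob (delta \<Omega> W) W hh
                   (\<lambda>w. w Sv = s1 \<and> restrict w A = a \<and> restrict w U = u)) ` Pi\<^sub>E U D)
          - Min ((\<lambda>u. cprob (delta \<Omega> W) W hh
                   (\<lambda>w. w Sv = s0 \<and> restrict w A = a \<and> restrict w U = u)) ` Pi\<^sub>E U D))"
proof -
  have finW: "finite W" unfolding W_def using dom_fin by (intro finite_PiE) auto
  define PU where "PU = Pi\<^sub>E U D"
  have finPU: "finite PU" unfolding PU_def using dom_fin by (intro finite_PiE) auto
  have nePU: "PU \<noteq> {}" unfolding PU_def using dom_fin by (simp add: PiE_eq_empty_iff)
  have resU: "\<And>w. w \<in> W \<Longrightarrow> restrict w U \<in> PU" unfolding W_def PU_def by auto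
  have resX: "\<And>w. w \<in> W \<Longrightarrow> restrict w X \<in> Pi\<^sub>E X D" unfolding W_def by auto
  have finX: "finite {x \<in> Pi\<^sub>E X D. h x}" using dom_fin by (intro finite_subset[OF _ finite_PiE[of X D]]) auto
  have neA: "Pi\<^sub>E A D \<noteq> {}" using dom_fin by (simp add: PiE_eq_empty_iff)
  have key: "\<And>s a. s \<in> {s0, s1} \<Longrightarrow> a \<in> Pi\<^sub>E A D \<Longrightarrow>
     Min ((\<lambda>u. cprob (delta \<Omega> W) W hh (\<lambda>w. w Sv = s \<and> restrict w A = a \<and> restrict w U = u)) ` PU)
       \<le> cprob (tgt \<Omega>) W hh (\<lambda>w. w Sv = s \<and> restrict w A = a) \<and>
     cprob (tgt \<Omega>) W hh (\<lambda>w. w Sv = s \<and> restrict w A = a)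
       \<le> Max ((\<lambda>u. cprob (delta \<Omega> W) W hh (\<lambda>w. w Sv = s \<and> restrict w A = a \<and> restrict w U = u)) ` PU)"
  proof -
    fix s a assume sS: "s \<in> {s0, s1}" and aA: "a \<in> Pi\<^sub>E A D"
    define q where "q u = pj \<Omega> W (\<lambda>w c. w Sv = s \<and> restrict w A = a \<and> restrict w U = u)" for u
    define n where "n u = pj \<Omega> W (\<lambda>w c. hh w \<and> (w Sv = s \<and> restrict w A = a \<and> restrict w U = u))" for u
    define cd where "cd u = cprob (delta \<Omega> W) W hh (\<lambda>w. w Sv = s \<and> restrict w A = a \<and> restrict w U = u)" for u
    have F1: "cprob (tgt \<Omega>) W hh (\<lambda>w. w Sv = s \<and> restrict w A = a) = (\<Sum>u\<in>PU. n u) / (\<Sum>u\<in>PU. q u)"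
    proof -
      have a1: "pj \<Omega> W (\<lambda>w c. hh w \<and> (w Sv = s \<and> restrict w A = a)) = (\<Sum>u\<in>PU. n u)"
      proof -
        have "pj \<Omega> W (\<lambda>w c. hh w \<and> (w Sv = s \<and> restrict w A = a))
            = pj \<Omega> W (\<lambda>w c. restrict w U \<in> PU \<and> (hh w \<and> (w Sv = s \<and> restrict w A = a)))"
          using resU by (intro pj_cong) auto
        also have "\<dots> = (\<Sum>u\<in>PU. pj \<Omega> W (\<lambda>w c. restrict w U = u \<and> (hh w \<and> (w Sv = s \<and> restrict w A = a))))"
          by (rule pj_sum[OF finPU, symmetric])
        also have "\<dots> = (\<Sum>u\<in>PU. n u)" unfolding n_def by (intro sum.cong refl pj_cong) auto
        finally show ?thesis .
      qed
      have a2: "pj \<Omega> W (\<lambda>w c. (w Sv = s \<and> restrict w A = a)) = (\<Sum>u\<in>PU. q u)"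
      proof -
        have "pj \<Omega> W (\<lambda>w c. (w Sv = s \<and> restrict w A = a))
            = pj \<Omega> W (\<lambda>w c. restrict w U \<in> PU \<and> (w Sv = s \<and> restrict w A = a))"
          using resU by (intro pj_cong) auto
        also have "\<dots> = (\<Sum>u\<in>PU. pj \<Omega> W (\<lambda>w c. restrict w U = u \<and> (w Sv = s \<and> restrict w A = a)))"
          by (rule pj_sum[OF finPU, symmetric])
        also have "\<dots> = (\<Sum>u\<in>PU. q u)" unfolding q_def by (intro sum.cong refl pj_cong) auto
        finally show ?thesis .
      qed
      show ?thesis unfolding cprob_tgt a1 a2 ..
    qed
    obtain u0 where u0: "u0 \<in> PU" using nePU by blast
    have Kpos: "pj \<Omega> W (\<lambda>w c. c) > 0"
    proof -
      have "0 < pj \<Omega> W (\<lambda>w c. w Sv = s \<and> restrict w A = a \<and> restrict w U = u0 \<and> c)"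
        using pos sS aA u0 unfolding PU_def by blast
      also have "\<dots> \<le> pj \<Omega> W (\<lambda>w c. c)" using \<Omega>_nonneg by (intro pj_mono) auto
      finally show ?thesis .
    qed
    have F2: "\<forall>u\<in>PU. q u > 0 \<and> n u = cd u * q u"
    proof
      fix u assume uP: "u \<in> PU"
      define Z where "Z w = (w Sv = s \<and> restrict w A = a \<and> restrict w U = u)" for w
      have q1: "pj \<Omega> W (\<lambda>w c. c \<and> Z w) > 0"
      proof -
        have "pj \<Omega> W (\<lambda>w c. c \<and> Z w) = pj \<Omega> W (\<lambda>w c. w Sv = s \<and> restrict w A = a \<and> restrict w U = u \<and> c)"
          unfolding Z_def by (intro pj_cong) auto
        thus ?thesis using pos sS aA uP unfolding PU_def by auto
      qed
      have qq: "q u \<ge> pj \<Omega> W (\<lambda>w c. c \<and> Z w)" unfolding q_def Z_def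
        using \<Omega>_nonneg by (intro pj_mono) auto
      have ciZ: "pj \<Omega> W (\<lambda>w c. c \<and> hh w \<and> Z w) * q u = n u * pj \<Omega> W (\<lambda>w c. c \<and> Z w)"
      proof -
        let ?S = "{x \<in> Pi\<^sub>E X D. h x}"
        have each: "\<forall>x. pj \<Omega> W (\<lambda>w c'. restrict w X = x \<and> c' = True \<and> Z w) * pj \<Omega> W (\<lambda>w c'. Z w)
          = pj \<Omega> W (\<lambda>w c'. restrict w X = x \<and> Z w) * pj \<Omega> W (\<lambda>w c'. c' = True \<and> Z w)"
          using ci unfolding cond_indep_XC_def Z_def W_def Let_def by blast
        hence "(\<Sum>x\<in>?S. pj \<Omega> W (\<lambda>w c'. restrict w X = x \<and> c' = True \<and> Z w)) * pj \<Omega> W (\<lambda>w c'. Z w)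
          = (\<Sum>x\<in>?S. pj \<Omega> W (\<lambda>w c'. restrict w X = x \<and> Z w)) * pj \<Omega> W (\<lambda>w c'. c' = True \<and> Z w)"
          by (simp add: sum_distrib_right)
        hence "pj \<Omega> W (\<lambda>w c'. restrict w X \<in> ?S \<and> (c' = True \<and> Z w)) * pj \<Omega> W (\<lambda>w c'. Z w)
          = pj \<Omega> W (\<lambda>w c'. restrict w X \<in> ?S \<and> Z w) * pj \<Omega> W (\<lambda>w c'. c' = True \<and> Z w)"
          by (simp only: pj_sum[OF finX])
        moreover have "pj \<Omega> W (\<lambda>w c'. restrict w X \<in> ?S \<and> (c' = True \<and> Z w)) = pj \<Omega> W (\<lambda>w c. c \<and> hh w \<and> Z w)"
          using resX unfolding hh_def by (intro pj_cong) auto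
        moreover have "pj \<Omega> W (\<lambda>w c'. restrict w X \<in> ?S \<and> Z w) = n u"
          using resX unfolding hh_def n_def Z_def by (intro pj_cong) auto
        moreover have "pj \<Omega> W (\<lambda>w c'. Z w) = q u" unfolding q_def Z_def ..
        moreover have "pj \<Omega> W (\<lambda>w c'. c' = True \<and> Z w) = pj \<Omega> W (\<lambda>w c. c \<and> Z w)"
          by (intro pj_cong) auto
        ultimately show ?thesis by simp
      qed
      have cdu: "cd u = pj \<Omega> W (\<lambda>w c. c \<and> hh w \<and> Z w) / pj \<Omega> W (\<lambda>w c. c \<and> Z w)"
        unfolding cd_def Z_def using Kpos by (intro cprob_delta) auto
      have qpos: "q u > 0" using q1 qq by linarith
      show "q u > 0 \<and> n u = cd u * q u"
        using qpos q1 ciZ unfolding cdu by (auto simp: field_simps)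
    qed
    have "Min (cd ` PU) \<le> (\<Sum>u\<in>PU. n u) / (\<Sum>u\<in>PU. q u) \<and> (\<Sum>u\<in>PU. n u) / (\<Sum>u\<in>PU. q u) \<le> Max (cd ` PU)"
      using F2 by (intro wavg finPU nePU) auto
    thus "?thesis s a" unfolding F1 cd_def .
  qed
  let ?p = "\<lambda>s a. cprob (tgt \<Omega>) W hh (\<lambda>w. w Sv = s \<and> restrict w A = a)"
  have fqe: "fq (tgt \<Omega>) D hh Sv s0 s1 A = (1 / real (card (Pi\<^sub>E A D))) * (\<Sum>a\<in>Pi\<^sub>E A D. \<bar>?p s1 a - ?p s0 a\<bar>)"
    unfolding fq_def W_def ..
  have "(\<Sum>a\<in>Pi\<^sub>E A D. \<bar>?p s1 a - ?p s0 a\<bar>) \<le>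
         (\<Sum>a\<in>Pi\<^sub>E A D.
            Max ((\<lambda>u. cprob (delta \<Omega> W) W hh
                   (\<lambda>w. w Sv = s1 \<and> restrict w A = a \<and> restrict w U = u)) ` Pi\<^sub>E U D)
          - Min ((\<lambda>u. cprob (delta \<Omega> W) W hh
                   (\<lambda>w. w Sv = s0 \<and> restrict w A = a \<and> restrict w U = u)) ` Pi\<^sub>E U D))"
  proof (intro sum_mono)
    fix a assume aA: "a \<in> Pi\<^sub>E A D"
    have k1: "?p s1 a \<le> Max ((\<lambda>u. cprob (delta \<Omega> W) W hh
                   (\<lambda>w. w Sv = s1 \<and> restrict w A = a \<and> restrict w U = u)) ` Pi\<^sub>E U D)"
      using key[of s1 a] aA unfolding PU_def by auto
    have k0: "Min ((\<lambda>u. cprob (delta \<Omega> W) W hh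
                   (\<lambda>w. w Sv = s0 \<and> restrict w A = a \<and> restrict w U = u)) ` Pi\<^sub>E U D) \<le> ?p s0 a"
      using key[of s0 a] aA unfolding PU_def by auto
    have "?p s0 a \<le> ?p s1 a" using mono_gap aA by auto
    thus "\<bar>?p s1 a - ?p s0 a\<bar> \<le> Max ((\<lambda>u. cprob (delta \<Omega> W) W hh
                   (\<lambda>w. w Sv = s1 \<and> restrict w A = a \<and> restrict w U = u)) ` Pi\<^sub>E U D)
          - Min ((\<lambda>u. cprob (delta \<Omega> W) W hh
                   (\<lambda>w. w Sv = s0 \<and> restrict w A = a \<and> restrict w U = u)) ` Pi\<^sub>E U D)"
      using k1 k0 by linarith
  qed
  moreover have "0 \<le> (1 / real (card (Pi\<^sub>E A D)))" by simp
  ultimately have le: "fq (tgt \<Omega>) D hh Sv s0 s1 A \<le> (1 / real (card (Pi\<^sub>E A D))) *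
         (\<Sum>a\<in>Pi\<^sub>E A D.
            Max ((\<lambda>u. cprob (delta \<Omega> W) W hh
                   (\<lambda>w. w Sv = s1 \<and> restrict w A = a \<and> restrict w U = u)) ` Pi\<^sub>E U D)
          - Min ((\<lambda>u. cprob (delta \<Omega> W) W hh
                   (\<lambda>w. w Sv = s0 \<and> restrict w A = a \<and> restrict w U = u)) ` Pi\<^sub>E U D))"
    unfolding fqe by (rule mult_left_mono)
  have "0 \<le> fq (tgt \<Omega>) D hh Sv s0 s1 A" unfolding fqe by (intro mult_nonneg_nonneg sum_nonneg) auto
  with le show ?thesis by blast
qed

end
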